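(* Let $\Sigma$ be a set of identities (equalities between terms) of a fixed finite algebraic type such that the variety of all algebras of that type satisfying $\Sigma$ is locally finite. Then the pseudovariety $\mathsf V$ of all finite algebras satisfying $\Sigma$ is strong.
   Context: A pseudovariety is a nonempty class of finite algebras of a fixed finite type closed under homomorphic images, subalgebras and finite direct products. A variety is locally finite if its finitely generated algebras are finite. For a pseudovariety $\mathsf U$ and finite set $A$, $\Omega_A\mathsf U$ is the free pro-$\mathsf U$ algebra on $A$ (inverse limit of the $A$-generated members of $\mathsf U$; every map from $A$ into a pro-$\mathsf U$ algebra extends uniquely to a continuous homomorphism). A $\mathsf U$-pseudoidentity is $u=v$ with $u,v\in\Omega_B\mathsf U$, $B$ finite; it holds in $T\in\mathsf U$ if both sides agree under every continuous homomorphism $\Omega_B\mathsf U\to T$. For a set $\Gamma$ of $\mathsf U$-pseudoidentities, $[\![\Gamma]\!]_{\mathsf U}$ denotes the members of $\mathsf U$ satisfying $\Gamma$. Provability: for finite $A$ define $\Gamma_\alpha\subseteq\Omega_A\mathsf U\times\Omega_A\mathsf U$: $\Gamma_0$ is the set of pairs $(\mathbf t(\varphi(u),w_1,\dots,w_n),\mathbf t(\varphi(v),w_1,\dots,w_n))$ with $u=v$ or $v=u$ in $\Gamma$, $u,v\in\Omega_B\mathsf U$, $\varphi:\Omega_B\mathsf U\to\Omega_A\mathsf U$ a continuous homomorphism, $\mathbf t$ a term, $w_i\in\Omega_A\mathsf U$; $\Gamma_{2\alpha+1}$ is the transitive closure of $\Gamma_{2\alpha}$; $\Gamma_{2\alpha+2}$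 the topological closure of $\Gamma_{2\alpha+1}$; unions at limit ordinals. $u=v$ is provable from $\Gamma$ if $(u,v)\in\bigcup_\alpha\Gamma_\alpha$. The pseudovariety $\mathsf U$ is strong if for every set $\Gamma$ of $\mathsf U$-pseudoidentities, every $\mathsf U$-pseudoidentity valid in $[\![\Gamma]\!]_{\mathsf U}$ is provable from $\Gamma$. *)

theory Defs
  imports "HOL-Analysis.Analysis"
begin

record ('f, 'a) alg =
  carr :: "'a set"
  opr  :: "'f \<Rightarrow> 'a list \<Rightarrow> 'a"

definition is_alg :: "'f set \<Rightarrow> ('f \<Rightarrow> nat) \<Rightarrow> ('f, 'a) alg \<Rightarrow> bool" where
  "is_alg F ar M \<longleftrightarrow>
     (\<forall>f\<in>F. \<forall>xs. length xs = ar f \<and> set xs \<subseteq> carr M \<longrightarrow> opr M f xs \<in> carr M)"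

definition is_hom :: "'f set \<Rightarrow> ('f \<Rightarrow> nat) \<Rightarrow> ('f, 'a) alg \<Rightarrow> ('f, 'b) alg \<Rightarrow> ('a \<Rightarrow> 'b) \<Rightarrow> bool" where
  "is_hom F ar M N h \<longleftrightarrow>
     (\<forall>x\<in>carr M. h x \<in> carr N) \<and>
     (\<forall>f\<in>F. \<forall>xs. length xs = ar f \<and> set xs \<subseteq> carr M \<longrightarrow>
                 h (opr M f xs) = opr N f (map h xs))"

datatype ('f, 'v) trm = Var 'v | App 'f "('f, 'v) trm list"

fun wf_trm :: "'f set \<Rightarrow> ('f \<Rightarrow> nat) \<Rightarrow> ('f, 'v) trm \<Rightarrow> bool" where
  "wf_trm F ar (Var v) = True"
| "wf_trm F ar (App f ts) = (f \<in> F \<and> length ts = ar f \<and> (\<forall>t\<in>set ts. wf_trm F ar t))"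

fun teval :: "('f, 'a) alg \<Rightarrow> ('v \<Rightarrow> 'a) \<Rightarrow> ('f, 'v) trm \<Rightarrow> 'a" where
  "teval M \<sigma> (Var v) = \<sigma> v"
| "teval M \<sigma> (App f ts) = opr M f (map (teval M \<sigma>) ts)"

definition satisfies :: "('f, 'a) alg \<Rightarrow> (('f, nat) trm \<times> ('f, nat) trm) set \<Rightarrow> bool" where
  "satisfies M \<Sigma> \<longleftrightarrow>
     (\<forall>(s, t)\<in>\<Sigma>. \<forall>\<sigma>. (\<forall>v. \<sigma> v \<in> carr M) \<longrightarrow> teval M \<sigma> s = teval M \<sigma> t)"

inductive_set gen_set :: "'f set \<Rightarrow> ('f \<Rightarrow> nat) \<Rightarrow> ('f, 'a) alg \<Rightarrow> 'a set \<Rightarrow> 'a set"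
  for F ar M G where
  base: "x \<in> G \<Longrightarrow> x \<in> gen_set F ar M G"
| step: "f \<in> F \<Longrightarrow> length xs = ar f \<Longrightarrow> (\<And>y. y \<in> set xs \<Longrightarrow> y \<in> gen_set F ar M G)
         \<Longrightarrow> opr M f xs \<in> gen_set F ar M G"

text \<open>Finitely generated algebras of a finite type are countable,
  so it suffices (up to isomorphism) to consider carriers contained in nat.\<close>
definition locally_finite :: "'f set \<Rightarrow> ('f \<Rightarrow> nat) \<Rightarrow> (('f, nat) trm \<times> ('f, nat) trm) set \<Rightarrow> bool" where
  "locally_finite F ar \<Sigma> \<longleftrightarrow>
     (\<forall>(M :: ('f, nat) alg) G. is_alg F ar M \<and> satisfies M \<Sigma> \<and> finite G \<and> G \<subseteq> carr M \<and>
        gen_set F ar M G = carr M \<longrightarrow> finite (carr M))"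

text \<open>Finite algebras are represented (up to isomorphism) with carriers in nat.
  A class of finite algebras is a set of such algebras.\<close>
definition V_of :: "'f set \<Rightarrow> ('f \<Rightarrow> nat) \<Rightarrow> (('f, nat) trm \<times> ('f, nat) trm) set \<Rightarrow> ('f, nat) alg set" where
  "V_of F ar \<Sigma> = {T. is_alg F ar T \<and> finite (carr T) \<and> satisfies T \<Sigma>}"

section \<open>Free pro-U algebras as compatible families (inverse limit)\<close>

type_synonym 'f coord = "('f, nat) alg \<times> (nat \<Rightarrow> nat)"

definition coords :: "('f, nat) alg set \<Rightarrow> nat set \<Rightarrow> 'f coord set" where
  "coords U A = {(T, \<psi>). T \<in> U \<and> \<psi> \<in> A \<rightarrow>\<^sub>E carr T}"

definition Omega :: "'f set \<Rightarrow> ('f \<Rightarrow> nat) \<Rightarrow> ('f, nat) alg set \<Rightarrow> nat set \<Rightarrow> ('f coord \<Rightarrow> nat) set" where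
  "Omega F ar U A =
     {x \<in> (\<Pi>\<^sub>E c\<in>coords U A. carr (fst c)).
        \<forall>T \<psi> T' \<psi>' h. (T, \<psi>) \<in> coords U A \<and> (T', \<psi>') \<in> coords U A \<and> is_hom F ar T T' h \<and>
           (\<forall>a\<in>A. h (\<psi> a) = \<psi>' a) \<longrightarrow> h (x (T, \<psi>)) = x (T', \<psi>')}"

definition Omega_alg :: "'f set \<Rightarrow> ('f \<Rightarrow> nat) \<Rightarrow> ('f, nat) alg set \<Rightarrow> nat set \<Rightarrow> ('f, 'f coord \<Rightarrow> nat) alg" where
  "Omega_alg F ar U A =
     \<lparr>carr = Omega F ar U A,
      opr = (\<lambda>f xs. \<lambda>c\<in>coords U A. opr (fst c) f (map (\<lambda>x. x c) xs))\<rparr>"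

definition Omega_top :: "'f set \<Rightarrow> ('f \<Rightarrow> nat) \<Rightarrow> ('f, nat) alg set \<Rightarrow> nat set \<Rightarrow> ('f coord \<Rightarrow> nat) topology" where
  "Omega_top F ar U A =
     subtopology (product_topology (\<lambda>c. discrete_topology (carr (fst c))) (coords U A)) (Omega F ar U A)"

definition cont_hom_OO :: "'f set \<Rightarrow> ('f \<Rightarrow> nat) \<Rightarrow> ('f, nat) alg set \<Rightarrow> nat set \<Rightarrow> nat set
    \<Rightarrow> (('f coord \<Rightarrow> nat) \<Rightarrow> ('f coord \<Rightarrow> nat)) \<Rightarrow> bool" where
  "cont_hom_OO F ar U B A \<phi> \<longleftrightarrow>
     is_hom F ar (Omega_alg F ar U B) (Omega_alg F ar U A) \<phi> \<and>
     continuous_map (Omega_top F ar U B) (Omega_top F ar U A) \<phi>"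

definition cont_hom_OT :: "'f set \<Rightarrow> ('f \<Rightarrow> nat) \<Rightarrow> ('f, nat) alg set \<Rightarrow> nat set
    \<Rightarrow> ('f, nat) alg \<Rightarrow> (('f coord \<Rightarrow> nat) \<Rightarrow> nat) \<Rightarrow> bool" where
  "cont_hom_OT F ar U B T \<phi> \<longleftrightarrow>
     is_hom F ar (Omega_alg F ar U B) T \<phi> \<and>
     continuous_map (Omega_top F ar U B) (discrete_topology (carr T)) \<phi>"

text \<open>A U-pseudoidentity u = v over the finite set B of variables is the triple (B, u, v).\<close>
type_synonym 'f pseudoid = "nat set \<times> ('f coord \<Rightarrow> nat) \<times> ('f coord \<Rightarrow> nat)"

definition is_pseudoid :: "'f set \<Rightarrow> ('f \<Rightarrow> nat) \<Rightarrow> ('f, nat) alg set \<Rightarrow> 'f pseudoid \<Rightarrow> bool" where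
  "is_pseudoid F ar U p \<longleftrightarrow>
     (case p of (B, u, v) \<Rightarrow> finite B \<and> u \<in> Omega F ar U B \<and> v \<in> Omega F ar U B)"

definition holds_in :: "'f set \<Rightarrow> ('f \<Rightarrow> nat) \<Rightarrow> ('f, nat) alg set \<Rightarrow> ('f, nat) alg \<Rightarrow> 'f pseudoid \<Rightarrow> bool" where
  "holds_in F ar U T p \<longleftrightarrow>
     (case p of (B, u, v) \<Rightarrow> \<forall>\<phi>. cont_hom_OT F ar U B T \<phi> \<longrightarrow> \<phi> u = \<phi> v)"

definition models :: "'f set \<Rightarrow> ('f \<Rightarrow> nat) \<Rightarrow> ('f, nat) alg set \<Rightarrow> 'f pseudoid set \<Rightarrow> ('f, nat) alg set" where
  "models F ar U \<Gamma> = {T \<in> U. \<forall>p\<in>\<Gamma>. holds_in F ar U T p}"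

definition Gamma0 :: "'f set \<Rightarrow> ('f \<Rightarrow> nat) \<Rightarrow> ('f, nat) alg set \<Rightarrow> 'f pseudoid set \<Rightarrow> nat set
    \<Rightarrow> (('f coord \<Rightarrow> nat) \<times> ('f coord \<Rightarrow> nat)) set" where
  "Gamma0 F ar U \<Gamma> A =
     {(teval (Omega_alg F ar U A) (w(0 := \<phi> u)) t, teval (Omega_alg F ar U A) (w(0 := \<phi> v)) t)
        | B u v \<phi> t w. ((B, u, v) \<in> \<Gamma> \<or> (B, v, u) \<in> \<Gamma>) \<and> cont_hom_OO F ar U B A \<phi> \<and>
           wf_trm F ar (t :: ('f, nat) trm) \<and> (\<forall>i::nat. w i \<in> Omega F ar U A)}"

text \<open>The union over all ordinals of the transfinite sequence Gamma_alpha
  (alternating transitive closure and topological closure) is the least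
  relation containing the base that is transitive and topologically closed.\<close>
definition provable_rel :: "'f set \<Rightarrow> ('f \<Rightarrow> nat) \<Rightarrow> ('f, nat) alg set \<Rightarrow> 'f pseudoid set \<Rightarrow> nat set
    \<Rightarrow> (('f coord \<Rightarrow> nat) \<times> ('f coord \<Rightarrow> nat)) set" where
  "provable_rel F ar U \<Gamma> A =
     lfp (\<lambda>R. Gamma0 F ar U \<Gamma> A \<union> Id_on (Omega F ar U A) \<union> R\<^sup>+ \<union>
              (prod_topology (Omega_top F ar U A) (Omega_top F ar U A)) closure_of R)"

definition strong :: "'f set \<Rightarrow> ('f \<Rightarrow> nat) \<Rightarrow> ('f, nat) alg set \<Rightarrow> bool" where
  "strong F ar U \<longleftrightarrow>
     (\<forall>\<Gamma>. (\<forall>p\<in>\<Gamma>. is_pseudoid F ar U p) \<longrightarrow>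
        (\<forall>A u v. finite A \<and> u \<in> Omega F ar U A \<and> v \<in> Omega F ar U A \<and>
           (\<forall>T\<in>models F ar U \<Gamma>. holds_in F ar U T (A, u, v)) \<longrightarrow>
           (u, v) \<in> provable_rel F ar U \<Gamma> A))"

end

theory Submission
  imports Defs "HOL-Library.Countable"
begin

fun vars :: "('f, 'v) trm \<Rightarrow> 'v set" where
  "vars (Var v) = {v}"
| "vars (App f ts) = (\<Union>t\<in>set ts. vars t)"

fun tsubst :: "('v \<Rightarrow> ('f, 'w) trm) \<Rightarrow> ('f, 'v) trm \<Rightarrow> ('f, 'w) trm" where
  "tsubst \<rho> (Var v) = \<rho> v"
| "tsubst \<rho> (App f ts) = App f (map (tsubst \<rho>) ts)"

lemma teval_tsubst: "teval M \<sigma> (tsubst \<rho> t) = teval M (\<lambda>v. teval M \<sigma> (\<rho> v)) t"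
  by (induction t) (auto intro!: arg_cong[where f="opr M _"] map_cong)

lemma teval_cong: "(\<And>v. v \<in> vars t \<Longrightarrow> \<sigma> v = \<sigma>' v) \<Longrightarrow> teval M \<sigma> t = teval M \<sigma>' t"
  by (induction t) (auto intro!: arg_cong[where f="opr M _"] map_cong)

lemma wf_tsubst: "wf_trm F ar t \<Longrightarrow> (\<And>v. v \<in> vars t \<Longrightarrow> wf_trm F ar (\<rho> v)) \<Longrightarrow> wf_trm F ar (tsubst \<rho> t)"
  by (induction t) auto

lemma vars_tsubst: "vars (tsubst \<rho> t) = (\<Union>v\<in>vars t. vars (\<rho> v))"
  by (induction t) auto

lemma teval_in: "is_alg F ar M \<Longrightarrow> wf_trm F ar t \<Longrightarrow> (\<And>v. v \<in> vars t \<Longrightarrow> \<sigma> v \<in> carr M)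
   \<Longrightarrow> teval M \<sigma> t \<in> carr M"
proof (induction t)
  case (Var x)
  then show ?case by simp
next
  case (App f ts)
  then have "set (map (teval M \<sigma>) ts) \<subseteq> carr M" by auto
  then show ?case using App.prems unfolding is_alg_def by auto
qed

lemma hom_teval: "is_alg F ar M \<Longrightarrow> is_hom F ar M N h \<Longrightarrow> wf_trm F ar t \<Longrightarrow> (\<And>v. v \<in> vars t \<Longrightarrow> \<sigma> v \<in> carr M)
   \<Longrightarrow> h (teval M \<sigma> t) = teval N (\<lambda>v. h (\<sigma> v)) t"
proof (induction t)
  case (Var x)
  then show ?case by simp
next
  case (App f ts)
  have "set (map (teval M \<sigma>) ts) \<subseteq> carr M"
    using App.prems by (auto intro!: teval_in)
  then have "h (opr M f (map (teval M \<sigma>) ts)) = opr N f (map h (map (teval M \<sigma>) ts))"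
    using App.prems unfolding is_hom_def by auto
  also have "map h (map (teval M \<sigma>) ts) = map (teval N (\<lambda>v. h (\<sigma> v))) ts"
    using App by auto
  finally show ?case by simp
qed


section \<open>Omega basics\<close>

lemma Omega_ext: "x \<in> Omega F ar U A \<Longrightarrow> x \<in> extensional (coords U A)"
  unfolding Omega_def by (auto simp: PiE_def)

lemma Omega_val: "x \<in> Omega F ar U A \<Longrightarrow> (T, \<psi>) \<in> coords U A \<Longrightarrow> x (T, \<psi>) \<in> carr T"
  unfolding Omega_def by (auto simp: PiE_def Pi_def)

lemma Omega_nat: "x \<in> Omega F ar U A \<Longrightarrow> (T, \<psi>) \<in> coords U A \<Longrightarrow> (T', \<psi>') \<in> coords U A \<Longrightarrow>
   is_hom F ar T T' h \<Longrightarrow> (\<And>a. a \<in> A \<Longrightarrow> h (\<psi> a) = \<psi>' a) \<Longrightarrow> h (x (T, \<psi>)) = x (T', \<psi>')"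
  unfolding Omega_def by blast

lemma OmegaI:
  assumes "x \<in> extensional (coords U A)"
    and "\<And>T \<psi>. (T, \<psi>) \<in> coords U A \<Longrightarrow> x (T, \<psi>) \<in> carr T"
    and "\<And>T \<psi> T' \<psi>' h. (T, \<psi>) \<in> coords U A \<Longrightarrow> (T', \<psi>') \<in> coords U A \<Longrightarrow>
   is_hom F ar T T' h \<Longrightarrow> (\<And>a. a \<in> A \<Longrightarrow> h (\<psi> a) = \<psi>' a) \<Longrightarrow> h (x (T, \<psi>)) = x (T', \<psi>')"
  shows "x \<in> Omega F ar U A"
  using assms unfolding Omega_def by (auto simp: PiE_def Pi_def)

lemma Omega_eqI: "x \<in> Omega F ar U A \<Longrightarrow> y \<in> Omega F ar U A \<Longrightarrow>
  (\<And>T \<psi>. (T, \<psi>) \<in> coords U A \<Longrightarrow> x (T, \<psi>) = y (T, \<psi>)) \<Longrightarrow> x = y"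
  by (metis Omega_ext extensionalityI surj_pair)

lemma carr_Omega_alg[simp]: "carr (Omega_alg F ar U A) = Omega F ar U A"
  by (simp add: Omega_alg_def)

lemma opr_Omega_alg: "opr (Omega_alg F ar U A) f xs = (\<lambda>c\<in>coords U A. opr (fst c) f (map (\<lambda>x. x c) xs))"
  by (simp add: Omega_alg_def)

lemma teval_Omega_coord: "c \<in> coords U A \<Longrightarrow> teval (Omega_alg F ar U A) w t c = teval (fst c) (\<lambda>i. w i c) t"
  by (induction t) (auto simp: opr_Omega_alg intro!: arg_cong[where f="opr _ _"] map_cong)

lemma teval_Omega_ext: "(\<And>v. v \<in> vars t \<Longrightarrow> w v \<in> Omega F ar U A) \<Longrightarrow>
   teval (Omega_alg F ar U A) w t \<in> extensional (coords U A)"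
  by (cases t) (auto simp: opr_Omega_alg Omega_ext)

lemma Omega_alg_is_alg:
  assumes hU: "\<forall>T\<in>U. is_alg F ar T"
  shows "is_alg F ar (Omega_alg F ar U A)"
  unfolding is_alg_def
proof (intro ballI allI impI)
  fix f xs assume f: "f \<in> F" and xs: "length xs = ar f \<and> set xs \<subseteq> carr (Omega_alg F ar U A)"
  show "opr (Omega_alg F ar U A) f xs \<in> carr (Omega_alg F ar U A)"
    unfolding carr_Omega_alg
  proof (rule OmegaI)
    show "opr (Omega_alg F ar U A) f xs \<in> extensional (coords U A)"
      by (simp add: opr_Omega_alg)
  next
    fix T \<psi> assume c: "(T, \<psi>) \<in> coords U A"
    then have "is_alg F ar T" using hU by (auto simp: coords_def)
    moreover have "set (map (\<lambda>x. x (T, \<psi>)) xs) \<subseteq> carr T"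
      using xs c Omega_val by fastforce
    ultimately show "opr (Omega_alg F ar U A) f xs (T, \<psi>) \<in> carr T"
      using c f xs by (auto simp: opr_Omega_alg is_alg_def)
  next
    fix T \<psi> T' \<psi>' h
    assume c: "(T, \<psi>) \<in> coords U A" and c': "(T', \<psi>') \<in> coords U A"
      and h: "is_hom F ar T T' h" and hp: "\<And>a. a \<in> A \<Longrightarrow> h (\<psi> a) = \<psi>' a"
    have s: "set (map (\<lambda>x. x (T, \<psi>)) xs) \<subseteq> carr T"
      using xs c Omega_val by fastforce
    have "h (opr T f (map (\<lambda>x. x (T, \<psi>)) xs)) = opr T' f (map h (map (\<lambda>x. x (T, \<psi>)) xs))"
      using h f xs s unfolding is_hom_def by auto
    also have "map h (map (\<lambda>x. x (T, \<psi>)) xs) = map (\<lambda>x. x (T', \<psi>')) xs"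
      using xs Omega_nat[OF _ c c' h hp] by auto
    finally show "h (opr (Omega_alg F ar U A) f xs (T, \<psi>)) = opr (Omega_alg F ar U A) f xs (T', \<psi>')"
      using c c' by (simp add: opr_Omega_alg)
  qed
qed

definition gen :: "('f, nat) alg set \<Rightarrow> nat set \<Rightarrow> nat \<Rightarrow> ('f coord \<Rightarrow> nat)" where
  "gen U A a = (\<lambda>c\<in>coords U A. snd c a)"

lemma gen_in: "a \<in> A \<Longrightarrow> gen U A a \<in> Omega F ar U A"
  unfolding gen_def by (rule OmegaI) (auto simp: coords_def)

lemma Omega_satisfies:
  assumes hS: "\<forall>T\<in>U. satisfies T \<Sigma>"
  shows "satisfies (Omega_alg F ar U A) \<Sigma>"
  unfolding satisfies_def
proof (clarify)
  fix s t and \<sigma> :: "nat \<Rightarrow> _" assume st: "(s, t) \<in> \<Sigma>" and \<sigma>: "\<forall>v. \<sigma> v \<in> carr (Omega_alg F ar U A)"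
  show "teval (Omega_alg F ar U A) \<sigma> s = teval (Omega_alg F ar U A) \<sigma> t"
  proof (rule extensionalityI)
    show "teval (Omega_alg F ar U A) \<sigma> s \<in> extensional (coords U A)"
      "teval (Omega_alg F ar U A) \<sigma> t \<in> extensional (coords U A)"
      using \<sigma> by (auto intro!: teval_Omega_ext)
  next
    fix c assume c: "c \<in> coords U A"
    obtain T \<psi> where cT: "c = (T, \<psi>)" by fastforce
    have "T \<in> U" using c cT by (auto simp: coords_def)
    then have "satisfies T \<Sigma>" using hS by auto
    moreover have "\<forall>v. \<sigma> v c \<in> carr T" using \<sigma> c cT Omega_val by (simp, blast)
    ultimately show "teval (Omega_alg F ar U A) \<sigma> s c = teval (Omega_alg F ar U A) \<sigma> t c"
      using st c cT by (simp add: teval_Omega_coord satisfies_def, fastforce)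
  qed
qed

lemma Omega_top_discrete:
  assumes "finite (Omega F ar U A)"
  shows "Omega_top F ar U A = discrete_topology (Omega F ar U A)"
proof (rule finite_topspace_imp_discrete_topology)
  show "topspace (Omega_top F ar U A) = Omega F ar U A"
    unfolding Omega_top_def Omega_def by (auto simp: PiE_def Pi_def)
  show "Hausdorff_space (Omega_top F ar U A)"
    unfolding Omega_top_def
    by (intro Hausdorff_space_subtopology) (simp add: Hausdorff_space_product_topology)
qed (fact assms)


section \<open>Countability of terms\<close>

instance trm :: (countable, countable) countable
  by countable_datatype

lemma map_trm_inv: "wf_trm F ar t \<Longrightarrow> (\<And>f. f \<in> F \<Longrightarrow> h (g f) = f) \<Longrightarrow> map_trm h id (map_trm g id t) = t"
  by (induction t) (auto intro: map_idI)

lemma countable_wf: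
  assumes "finite F"
  shows "countable {t :: ('f, nat) trm. wf_trm F ar t}"
proof -
  let ?g = "to_nat_on F" and ?h = "from_nat_into F"
  have "countable F" using assms by (simp add: countable_finite)
  then have hg: "\<And>f. f \<in> F \<Longrightarrow> ?h (?g f) = f" by (simp add: from_nat_into_to_nat_on)
  have "inj_on (map_trm ?g id) {t :: ('f, nat) trm. wf_trm F ar t}"
    by (rule inj_on_inverseI[where g="map_trm ?h id"]) (use map_trm_inv[where h="?h" and g="?g"] hg in auto)
  moreover have "countable (map_trm ?g id ` {t :: ('f, nat) trm. wf_trm F ar t})"
    by (rule countableI_type)
  ultimately show ?thesis using countable_image_inj_on by blast
qed

definition QT :: "'f set \<Rightarrow> ('f \<Rightarrow> nat) \<Rightarrow> nat set \<Rightarrow> ('f, nat) trm set" where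
  "QT F ar A = {t. wf_trm F ar t \<and> vars t \<subseteq> A}"

lemma QT_App: "f \<in> F \<Longrightarrow> length ts = ar f \<Longrightarrow> set ts \<subseteq> QT F ar A \<Longrightarrow> App f ts \<in> QT F ar A"
  unfolding QT_def by auto

lemma QT_Var: "a \<in> A \<Longrightarrow> Var a \<in> QT F ar A"
  unfolding QT_def by auto

section \<open>Generic term quotient\<close>

locale tquot =
  fixes F :: "'f set" and ar :: "'f \<Rightarrow> nat" and A :: "nat set"
    and E :: "(('f, nat) trm \<times> ('f, nat) trm) set"
    and \<Sigma> :: "(('f, nat) trm \<times> ('f, nat) trm) set"
  assumes finF: "finite F"
    and eqv: "equiv (QT F ar A) E"
    and cmp: "\<And>f ss ts. f \<in> F \<Longrightarrow> length ss = ar f \<Longrightarrow> list_all2 (\<lambda>s t. (s, t) \<in> E) ss ts \<Longrightarrow>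
        (App f ss, App f ts) \<in> E"
    and sig: "\<And>s t \<rho>. (s, t) \<in> \<Sigma> \<Longrightarrow> (\<And>v. \<rho> v \<in> QT F ar A) \<Longrightarrow> (tsubst \<rho> s, tsubst \<rho> t) \<in> E"
    and sigwf: "\<forall>(s, t)\<in>\<Sigma>. wf_trm F ar s \<and> wf_trm F ar t"
begin

abbreviation "Q \<equiv> QT F ar A"

definition cls :: "('f, nat) trm \<Rightarrow> ('f, nat) trm set" where
  "cls t = {s \<in> Q. (s, t) \<in> E}"

definition qc :: "('f, nat) trm \<Rightarrow> nat" where
  "qc t = to_nat_on (cls ` Q) (cls t)"

definition rep :: "nat \<Rightarrow> ('f, nat) trm" where
  "rep n = (SOME t. t \<in> Q \<and> qc t = n)"

definition Quot :: "('f, nat) alg" where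
  "Quot = \<lparr>carr = qc ` Q, opr = (\<lambda>f ns. qc (App f (map rep ns)))\<rparr>"

lemma carr_Quot[simp]: "carr Quot = qc ` Q"
  by (simp add: Quot_def)

lemma E_sub: "E \<subseteq> Q \<times> Q"
  using eqv by (simp add: equiv_def refl_on_def)

lemma countQ: "countable Q"
  using countable_wf[OF finF, of ar] unfolding QT_def by (rule countable_subset[rotated]) auto

lemma qc_eq: "s \<in> Q \<Longrightarrow> t \<in> Q \<Longrightarrow> qc s = qc t \<longleftrightarrow> (s, t) \<in> E"
proof -
  assume s: "s \<in> Q" and t: "t \<in> Q"
  have inj: "inj_on (to_nat_on (cls ` Q)) (cls ` Q)"
    using countQ by (intro inj_on_to_nat_on) auto
  have "qc s = qc t \<longleftrightarrow> cls s = cls t"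
    unfolding qc_def using inj_on_eq_iff[OF inj, of "cls s" "cls t"] s t by auto
  also have "\<dots> \<longleftrightarrow> (s, t) \<in> E"
  proof
    assume "cls s = cls t"
    moreover have "s \<in> cls s" using s eqv unfolding cls_def equiv_def refl_on_def by auto
    ultimately show "(s, t) \<in> E" unfolding cls_def by auto
  next
    assume st: "(s, t) \<in> E"
    show "cls s = cls t" unfolding cls_def
      using st eqv unfolding equiv_def by (auto elim: transE symE)
  qed
  finally show ?thesis .
qed

lemma rep: "n \<in> qc ` Q \<Longrightarrow> rep n \<in> Q \<and> qc (rep n) = n"
  unfolding rep_def by (rule someI_ex) auto

lemma rep_qc: "t \<in> Q \<Longrightarrow> (rep (qc t), t) \<in> E"
  using rep[of "qc t"] qc_eq by auto

lemma E_refl: "t \<in> Q \<Longrightarrow> (t, t) \<in> E"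
  using eqv unfolding equiv_def refl_on_def by auto

lemma opr_qc: "f \<in> F \<Longrightarrow> length ts = ar f \<Longrightarrow> set ts \<subseteq> Q \<Longrightarrow> opr Quot f (map qc ts) = qc (App f ts)"
proof -
  assume f: "f \<in> F" and l: "length ts = ar f" and ts: "set ts \<subseteq> Q"
  have r: "set (map rep (map qc ts)) \<subseteq> Q" using ts rep by auto
  have "list_all2 (\<lambda>s t. (s, t) \<in> E) (map rep (map qc ts)) ts"
    using ts nth_mem by (fastforce simp: list_all2_conv_all_nth intro!: rep_qc)
  then have "(App f (map rep (map qc ts)), App f ts) \<in> E"
    using cmp f l by simp
  moreover have "App f (map rep (map qc ts)) \<in> Q" using f l r by (intro QT_App) auto
  moreover have "App f ts \<in> Q" using f l ts by (intro QT_App) auto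
  ultimately show ?thesis by (simp add: Quot_def qc_eq)
qed

lemma Quot_is_alg: "is_alg F ar Quot"
  unfolding is_alg_def
proof (intro ballI allI impI)
  fix f ns assume f: "f \<in> F" and ns: "length ns = ar f \<and> set ns \<subseteq> carr Quot"
  have r: "set (map rep ns) \<subseteq> Q" using ns rep by auto
  have "App f (map rep ns) \<in> Q" using f ns r by (intro QT_App) auto
  then show "opr Quot f ns \<in> carr Quot" by (simp add: Quot_def)
qed

lemma teval_Quot: "wf_trm F ar t \<Longrightarrow> (\<And>v. \<sigma> v \<in> carr Quot) \<Longrightarrow>
    teval Quot \<sigma> t = qc (tsubst (\<lambda>v. rep (\<sigma> v)) t) \<and> tsubst (\<lambda>v. rep (\<sigma> v)) t \<in> Q"
proof (induction t)
  case (Var x)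
  then show ?case using rep[of "\<sigma> x"] by simp
next
  case (App f ts)
  let ?\<rho> = "\<lambda>v. rep (\<sigma> v)"
  have IH: "\<And>t. t \<in> set ts \<Longrightarrow> teval Quot \<sigma> t = qc (tsubst ?\<rho> t) \<and> tsubst ?\<rho> t \<in> Q"
    using App by auto
  have f: "f \<in> F" and l: "length ts = ar f" using App.prems by auto
  have s: "set (map (tsubst ?\<rho>) ts) \<subseteq> Q" using IH by auto
  have "teval Quot \<sigma> (App f ts) = opr Quot f (map qc (map (tsubst ?\<rho>) ts))"
    using IH by (simp cong: map_cong)
  also have "\<dots> = qc (App f (map (tsubst ?\<rho>) ts))"
    using opr_qc[OF f _ s] l by simp
  finally show ?case using QT_App[OF f _ s] l by simp
qed

lemma Quot_satisfies: "satisfies Quot \<Sigma>"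
  unfolding satisfies_def
proof (clarify)
  fix s t and \<sigma> :: "nat \<Rightarrow> nat" assume st: "(s, t) \<in> \<Sigma>" and \<sigma>: "\<forall>v. \<sigma> v \<in> carr Quot"
  have w: "wf_trm F ar s" "wf_trm F ar t" using st sigwf by auto
  have r: "\<And>v. rep (\<sigma> v) \<in> Q" using \<sigma> rep by auto
  have E: "(tsubst (\<lambda>v. rep (\<sigma> v)) s, tsubst (\<lambda>v. rep (\<sigma> v)) t) \<in> E" by (rule sig[OF st r])
  show "teval Quot \<sigma> s = teval Quot \<sigma> t"
    using teval_Quot[OF w(1), of \<sigma>] teval_Quot[OF w(2), of \<sigma>] \<sigma> E qc_eq by auto
qed

lemma Quot_gen: "gen_set F ar Quot (qc ` Var ` A) = carr Quot"
proof
  show "gen_set F ar Quot (qc ` Var ` A) \<subseteq> carr Quot"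
  proof
    fix x assume "x \<in> gen_set F ar Quot (qc ` Var ` A)"
    then show "x \<in> carr Quot"
    proof (induction rule: gen_set.induct)
      case (base x)
      then show ?case using QT_Var[of _ A F ar] by auto
    next
      case (step f xs)
      then have "set xs \<subseteq> carr Quot" by auto
      then show ?case using Quot_is_alg step(1,2) unfolding is_alg_def by blast
    qed
  qed
next
  have "t \<in> Q \<Longrightarrow> qc t \<in> gen_set F ar Quot (qc ` Var ` A)" for t
  proof (induction t)
    case (Var x)
    then show ?case by (auto simp: QT_def intro: gen_set.base)
  next
    case (App f ts)
    then have f: "f \<in> F" and l: "length ts = ar f" and s: "set ts \<subseteq> Q"
      by (auto simp: QT_def)
    have "opr Quot f (map qc ts) \<in> gen_set F ar Quot (qc ` Var ` A)"
      using App s f l by (intro gen_set.step) auto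
    then show ?case using opr_qc[OF f l s] by simp
  qed
  then show "carr Quot \<subseteq> gen_set F ar Quot (qc ` Var ` A)" by auto
qed

lemma Quot_finite:
  assumes "locally_finite F ar \<Sigma>" and "finite A"
  shows "finite (carr Quot)"
proof -
  have "qc ` Var ` A \<subseteq> carr Quot" using QT_Var[of _ A F ar] by auto
  moreover have "finite (qc ` Var ` A)" using assms(2) by simp
  ultimately show ?thesis
    using assms(1) Quot_is_alg Quot_satisfies Quot_gen unfolding locally_finite_def by blast
qed

lemma Quot_V: "locally_finite F ar \<Sigma> \<Longrightarrow> finite A \<Longrightarrow> Quot \<in> V_of F ar \<Sigma>"
  using Quot_finite Quot_is_alg Quot_satisfies by (simp add: V_of_def)

end


definition freeE :: "'f set \<Rightarrow> ('f \<Rightarrow> nat) \<Rightarrow> (('f, nat) trm \<times> ('f, nat) trm) set \<Rightarrow> nat set \<Rightarrow>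
   (('f, nat) trm \<times> ('f, nat) trm) set" where
  "freeE F ar \<Sigma> A = {(s, t). s \<in> QT F ar A \<and> t \<in> QT F ar A \<and>
     (\<forall>T\<in>V_of F ar \<Sigma>. \<forall>\<psi>. (\<forall>a\<in>A. \<psi> a \<in> carr T) \<longrightarrow> teval T \<psi> s = teval T \<psi> t)}"

lemma QT_teval_in: "t \<in> QT F ar A \<Longrightarrow> is_alg F ar T \<Longrightarrow> (\<forall>a\<in>A. \<psi> a \<in> carr T) \<Longrightarrow> teval T \<psi> t \<in> carr T"
  unfolding QT_def by (auto intro!: teval_in)

locale setting =
  fixes F :: "'f set" and ar :: "'f \<Rightarrow> nat" and \<Sigma> :: "(('f, nat) trm \<times> ('f, nat) trm) set"
  assumes finF: "finite F"
    and sigwf: "\<forall>(s, t)\<in>\<Sigma>. wf_trm F ar s \<and> wf_trm F ar t"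
    and lf: "locally_finite F ar \<Sigma>"
begin

abbreviation "U \<equiv> V_of F ar \<Sigma>"

lemma U_alg: "T \<in> U \<Longrightarrow> is_alg F ar T"
  by (simp add: V_of_def)

lemma U_sat: "T \<in> U \<Longrightarrow> satisfies T \<Sigma>"
  by (simp add: V_of_def)

lemma free_tquot: "tquot F ar A (freeE F ar \<Sigma> A) \<Sigma>"
proof
  show "finite F" by (fact finF)
  show "\<forall>(s, t)\<in>\<Sigma>. wf_trm F ar s \<and> wf_trm F ar t" by (fact sigwf)
  show "equiv (QT F ar A) (freeE F ar \<Sigma> A)"
    by (rule equivI) (auto simp: freeE_def refl_on_def sym_def trans_def)
next
  fix f ss ts assume f: "f \<in> F" and l: "length ss = ar f"
    and st: "list_all2 (\<lambda>s t. (s, t) \<in> freeE F ar \<Sigma> A) ss ts"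
  have l2: "length ts = ar f" using st l by (simp add: list_all2_lengthD)
  have "set ss \<subseteq> QT F ar A" "set ts \<subseteq> QT F ar A"
    using st by (fastforce simp: list_all2_conv_all_nth freeE_def in_set_conv_nth)+
  moreover have "map (teval T \<psi>) ss = map (teval T \<psi>) ts" if "T \<in> U" "\<forall>a\<in>A. \<psi> a \<in> carr T" for T \<psi>
    using st that by (auto simp: list_all2_conv_all_nth freeE_def intro!: nth_equalityI)
  ultimately show "(App f ss, App f ts) \<in> freeE F ar \<Sigma> A"
    using f l l2 by (auto simp: freeE_def intro!: QT_App)
next
  fix s t and \<rho> :: "nat \<Rightarrow> ('f, nat) trm"
  assume st: "(s, t) \<in> \<Sigma>" and \<rho>: "\<And>v. \<rho> v \<in> QT F ar A"
  have w: "wf_trm F ar s" "wf_trm F ar t" using st sigwf by auto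
  have "tsubst \<rho> s \<in> QT F ar A" "tsubst \<rho> t \<in> QT F ar A"
    using w \<rho> by (auto simp: QT_def vars_tsubst intro!: wf_tsubst)
  moreover have "teval T \<psi> (tsubst \<rho> s) = teval T \<psi> (tsubst \<rho> t)"
    if T: "T \<in> U" and \<psi>: "\<forall>a\<in>A. \<psi> a \<in> carr T" for T \<psi>
  proof -
    have "\<forall>v. teval T \<psi> (\<rho> v) \<in> carr T" using \<rho> QT_teval_in U_alg[OF T] \<psi> by blast
    then show ?thesis using U_sat[OF T] st by (simp add: teval_tsubst satisfies_def, fastforce)
  qed
  ultimately show "(tsubst \<rho> s, tsubst \<rho> t) \<in> freeE F ar \<Sigma> A"
    by (auto simp: freeE_def)
qed

definition FM :: "nat set \<Rightarrow> ('f, nat) alg" where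
  "FM A = tquot.Quot F ar A (freeE F ar \<Sigma> A)"

definition Fpsi :: "nat set \<Rightarrow> nat \<Rightarrow> nat" where
  "Fpsi A = (\<lambda>a\<in>A. tquot.qc F ar A (freeE F ar \<Sigma> A) (Var a))"

lemma free_univ:
  assumes A: "finite A" and c: "(T, \<psi>) \<in> coords U A"
  shows "\<exists>h. is_hom F ar (FM A) T h \<and> (\<forall>s\<in>QT F ar A. h (tquot.qc F ar A (freeE F ar \<Sigma> A) s) = teval T \<psi> s)"
proof -
  interpret fr: tquot F ar A "freeE F ar \<Sigma> A" \<Sigma> by (rule free_tquot)
  let ?M = "fr.Quot"
  have T: "T \<in> U" and \<psi>: "\<forall>a\<in>A. \<psi> a \<in> carr T" using c by (auto simp: coords_def)
  define h where "h n = teval T \<psi> (fr.rep n)" for n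
  have hq: "h (fr.qc s) = teval T \<psi> s" if s: "s \<in> QT F ar A" for s
  proof -
    have "(fr.rep (fr.qc s), s) \<in> freeE F ar \<Sigma> A" using fr.rep_qc[OF s] .
    then show ?thesis unfolding h_def freeE_def using T \<psi> by auto
  qed
  have hom: "is_hom F ar ?M T h"
    unfolding is_hom_def
  proof (intro conjI ballI allI impI)
    fix n assume "n \<in> carr ?M"
    then obtain s where "s \<in> QT F ar A" "n = fr.qc s" by auto
    then show "h n \<in> carr T" using hq QT_teval_in U_alg[OF T] \<psi> by auto
  next
    fix f ns assume f: "f \<in> F" and ns: "length ns = ar f \<and> set ns \<subseteq> carr ?M"
    have r: "set (map fr.rep ns) \<subseteq> QT F ar A" using ns fr.rep by auto
    have "map fr.qc (map fr.rep ns) = ns" using ns fr.rep by (auto intro!: map_idI)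
    then have "opr ?M f ns = fr.qc (App f (map fr.rep ns))"
      using fr.opr_qc[OF f _ r] ns by (metis length_map)
    then have "h (opr ?M f ns) = teval T \<psi> (App f (map fr.rep ns))"
      using hq QT_App[OF f _ r] ns by auto
    also have "\<dots> = opr T f (map h ns)" unfolding h_def by (simp add: comp_def)
    finally show "h (opr ?M f ns) = opr T f (map h ns)" .
  qed
  show ?thesis using hom hq unfolding FM_def by blast
qed

lemma FM_coords: "finite A \<Longrightarrow> (FM A, Fpsi A) \<in> coords U A"
proof -
  assume A: "finite A"
  interpret fr: tquot F ar A "freeE F ar \<Sigma> A" \<Sigma> by (rule free_tquot)
  have "fr.Quot \<in> U" using fr.Quot_V[OF lf A] .
  then show ?thesis using QT_Var[of _ A F ar] by (auto simp: coords_def FM_def Fpsi_def)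
qed

lemma FM_finite: "finite A \<Longrightarrow> finite (carr (FM A))"
proof -
  assume A: "finite A"
  interpret fr: tquot F ar A "freeE F ar \<Sigma> A" \<Sigma> by (rule free_tquot)
  show ?thesis using fr.Quot_finite[OF lf A] by (simp add: FM_def)
qed

lemma FM_carr: "finite A \<Longrightarrow> n \<in> carr (FM A) \<Longrightarrow> \<exists>t\<in>QT F ar A. n = tquot.qc F ar A (freeE F ar \<Sigma> A) t"
proof -
  interpret fr: tquot F ar A "freeE F ar \<Sigma> A" \<Sigma> by (rule free_tquot)
  show "n \<in> carr (FM A) \<Longrightarrow> ?thesis" by (auto simp: FM_def)
qed

lemma generation:
  assumes A: "finite A" and x: "x \<in> Omega F ar U A"
  shows "\<exists>t\<in>QT F ar A. x = teval (Omega_alg F ar U A) (gen U A) t"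
proof -
  have c0: "(FM A, Fpsi A) \<in> coords U A" using FM_coords[OF A] .
  obtain t where t: "t \<in> QT F ar A" "x (FM A, Fpsi A) = tquot.qc F ar A (freeE F ar \<Sigma> A) t"
    using FM_carr[OF A Omega_val[OF x c0]] by auto
  have key: "x (T, \<psi>) = teval T \<psi> t" if c: "(T, \<psi>) \<in> coords U A" for T \<psi>
  proof -
    obtain h where hom: "is_hom F ar (FM A) T h"
      and hq: "\<forall>s\<in>QT F ar A. h (tquot.qc F ar A (freeE F ar \<Sigma> A) s) = teval T \<psi> s"
      using free_univ[OF A c] by blast
    have "h (x (FM A, Fpsi A)) = x (T, \<psi>)"
      by (rule Omega_nat[OF x c0 c hom]) (simp add: hq QT_Var Fpsi_def)
    then show ?thesis using hq t by simp
  qed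
  have "x = teval (Omega_alg F ar U A) (gen U A) t"
  proof (rule Omega_eqI[OF x])
    have "teval (Omega_alg F ar U A) (gen U A) t \<in> carr (Omega_alg F ar U A)"
      by (rule teval_in[OF Omega_alg_is_alg]) (use U_alg t in \<open>auto simp: QT_def intro!: gen_in\<close>)
    then show "teval (Omega_alg F ar U A) (gen U A) t \<in> Omega F ar U A" by simp
    fix T \<psi> assume c: "(T, \<psi>) \<in> coords U A"
    have "teval (Omega_alg F ar U A) (gen U A) t (T, \<psi>) = teval T \<psi> t"
      using c by (simp add: teval_Omega_coord gen_def)
    then show "x (T, \<psi>) = teval (Omega_alg F ar U A) (gen U A) t (T, \<psi>)" using key c by simp
  qed
  then show ?thesis using t by blast
qed

lemma Omega_finite:
  assumes A: "finite A"
  shows "finite (Omega F ar U A)"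
proof -
  have c0: "(FM A, Fpsi A) \<in> coords U A" using FM_coords[OF A] .
  have "inj_on (\<lambda>x. x (FM A, Fpsi A)) (Omega F ar U A)"
  proof (rule inj_onI)
    fix x y assume x: "x \<in> Omega F ar U A" and y: "y \<in> Omega F ar U A"
      and e: "x (FM A, Fpsi A) = y (FM A, Fpsi A)"
    show "x = y"
    proof (rule Omega_eqI[OF x y])
      fix T \<psi> assume c: "(T, \<psi>) \<in> coords U A"
      obtain h where hom: "is_hom F ar (FM A) T h"
        and hq: "\<forall>s\<in>QT F ar A. h (tquot.qc F ar A (freeE F ar \<Sigma> A) s) = teval T \<psi> s"
        using free_univ[OF A c] by blast
      have "h (x (FM A, Fpsi A)) = x (T, \<psi>)" "h (y (FM A, Fpsi A)) = y (T, \<psi>)"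
        by (rule Omega_nat[OF x c0 c hom], simp add: hq QT_Var Fpsi_def)
           (rule Omega_nat[OF y c0 c hom], simp add: hq QT_Var Fpsi_def)
      then show "x (T, \<psi>) = y (T, \<psi>)" using e by simp
    qed
  qed
  moreover have "(\<lambda>x. x (FM A, Fpsi A)) ` Omega F ar U A \<subseteq> carr (FM A)"
    using Omega_val[OF _ c0] by blast
  ultimately show ?thesis using FM_finite[OF A] finite_imageD finite_subset by blast
qed


definition P :: "nat set \<Rightarrow> (nat \<Rightarrow> 'f coord \<Rightarrow> nat) \<Rightarrow> ('f, nat) trm \<Rightarrow> ('f coord \<Rightarrow> nat) \<Rightarrow> ('f coord \<Rightarrow> nat)" where
  "P A w t x = teval (Omega_alg F ar U A) (w(0 := x)) t"

lemma P_in: "wf_trm F ar t \<Longrightarrow> (\<forall>i. w i \<in> Omega F ar U A) \<Longrightarrow> x \<in> Omega F ar U A \<Longrightarrow> P A w t x \<in> Omega F ar U A"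
  unfolding P_def using teval_in[OF Omega_alg_is_alg[of U F ar A], of t "w(0:=x)"] U_alg by auto

lemma P_comp:
  assumes "wf_trm F ar s" "wf_trm F ar t" "\<forall>i. w i \<in> Omega F ar U A" "\<forall>i. w' i \<in> Omega F ar U A"
  shows "\<exists>s'' w''. wf_trm F ar s'' \<and> (\<forall>i. w'' i \<in> Omega F ar U A) \<and> (\<forall>x. P A w' s (P A w t x) = P A w'' s'' x)"
proof -
  define tsh where "tsh = tsubst (\<lambda>j. if j = 0 then Var 0 else Var (2 * j)) t"
  define \<rho> where "\<rho> i = (if i = 0 then tsh else Var (2 * i + 1))" for i :: nat
  define s'' where "s'' = tsubst \<rho> s"
  define w'' where "w'' k = (if even k then w (k div 2) else w' (k div 2))" for k :: nat
  have wf1: "wf_trm F ar tsh" unfolding tsh_def using assms(2) by (auto intro!: wf_tsubst)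
  have wf2: "wf_trm F ar s''" unfolding s''_def using assms(1) wf1 by (auto intro!: wf_tsubst simp: \<rho>_def)
  have w'': "\<forall>i. w'' i \<in> Omega F ar U A" using assms(3,4) by (simp add: w''_def)
  have "P A w' s (P A w t x) = P A w'' s'' x" for x
  proof -
    have e1: "(\<lambda>j. teval (Omega_alg F ar U A) (w''(0 := x)) (if j = 0 then Var 0 else Var (2 * j))) = w(0 := x)"
      by (auto simp: w''_def)
    have e2: "(\<lambda>i. teval (Omega_alg F ar U A) (w''(0 := x)) (\<rho> i)) = w'(0 := P A w t x)"
      by (auto simp: \<rho>_def tsh_def teval_tsubst e1 P_def w''_def)
    show ?thesis unfolding P_def s''_def by (simp add: teval_tsubst e2 P_def)
  qed
  then show ?thesis using wf2 w'' by blast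
qed

lemma P_opr:
  assumes f: "f \<in> F" and l: "length z = ar f" and k: "k < ar f" and z: "set z \<subseteq> Omega F ar U A"
  shows "\<exists>t w. wf_trm F ar t \<and> (\<forall>i. w i \<in> Omega F ar U A) \<and>
     (\<forall>x. P A w t x = opr (Omega_alg F ar U A) f (z[k := x]))"
proof -
  let ?n = "ar f"
  define t where "t = App f (map (\<lambda>j. if j = k then Var 0 else Var (Suc j)) [0..<?n])"
  define w where "w i = (if 0 < i \<and> i \<le> ?n then z ! (i - 1) else z ! 0)" for i
  have wf: "wf_trm F ar t" using f by (auto simp: t_def)
  have "\<forall>i. w i \<in> Omega F ar U A" using z l k by (auto simp: w_def)
  moreover have "P A w t x = opr (Omega_alg F ar U A) f (z[k := x])" for x
  proof -
    have "map (teval (Omega_alg F ar U A) (w(0 := x))) (map (\<lambda>j. if j = k then Var 0 else Var (Suc j)) [0..<?n])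
       = z[k := x]"
      using l by (intro nth_equalityI) (auto simp: w_def nth_list_update)
    then show ?thesis by (simp add: P_def t_def)
  qed
  ultimately show ?thesis using wf by blast
qed

end

locale prov = setting F ar \<Sigma> for F :: "'f set" and ar and \<Sigma> +
  fixes \<Gamma> :: "'f pseudoid set" and A :: "nat set"
  assumes finA: "finite A"
    and pseud: "\<forall>p\<in>\<Gamma>. is_pseudoid F ar U p"
begin

abbreviation "Om \<equiv> Omega F ar U A"
abbreviation "OA \<equiv> Omega_alg F ar U A"
abbreviation "R \<equiv> provable_rel F ar U \<Gamma> A"
abbreviation "G0 \<equiv> Gamma0 F ar U \<Gamma> A"

lemma R_fix: "R = G0 \<union> Id_on Om \<union> R\<^sup>+ \<union>
   (prod_topology (Omega_top F ar U A) (Omega_top F ar U A)) closure_of R"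
proof -
  have "mono (\<lambda>R. G0 \<union> Id_on Om \<union> R\<^sup>+ \<union>
              (prod_topology (Omega_top F ar U A) (Omega_top F ar U A)) closure_of R)"
  proof (rule monoI)
    fix X Y :: "(('f coord \<Rightarrow> nat) \<times> ('f coord \<Rightarrow> nat)) set" assume XY: "X \<subseteq> Y"
    have "X\<^sup>+ \<subseteq> Y\<^sup>+" using XY trancl_mono by blast
    moreover have "(prod_topology (Omega_top F ar U A) (Omega_top F ar U A)) closure_of X \<subseteq>
       (prod_topology (Omega_top F ar U A) (Omega_top F ar U A)) closure_of Y"
      using XY by (rule closure_of_mono)
    ultimately show "G0 \<union> Id_on Om \<union> X\<^sup>+ \<union> prod_topology (Omega_top F ar U A) (Omega_top F ar U A) closure_of X
      \<subseteq> G0 \<union> Id_on Om \<union> Y\<^sup>+ \<union> prod_topology (Omega_top F ar U A) (Omega_top F ar U A) closure_of Y"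
      by blast
  qed
  then show ?thesis unfolding provable_rel_def by (rule lfp_unfold)
qed

lemma G0_R: "G0 \<subseteq> R" using R_fix by blast
lemma Id_R: "a \<in> Om \<Longrightarrow> (a, a) \<in> R" using R_fix by blast
lemma R_trans: "(a, b) \<in> R \<Longrightarrow> (b, c) \<in> R \<Longrightarrow> (a, c) \<in> R"
proof -
  assume "(a, b) \<in> R" "(b, c) \<in> R"
  then have "(a, c) \<in> R\<^sup>+" by auto
  then show ?thesis using R_fix by blast
qed


lemma G0_iff: "(a, b) \<in> G0 \<longleftrightarrow> (\<exists>B u v \<phi> t w. ((B, u, v) \<in> \<Gamma> \<or> (B, v, u) \<in> \<Gamma>) \<and> cont_hom_OO F ar U B A \<phi> \<and>
   wf_trm F ar t \<and> (\<forall>i. w i \<in> Om) \<and> a = P A w t (\<phi> u) \<and> b = P A w t (\<phi> v))"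
  unfolding Gamma0_def P_def by blast

lemma G0_in: "(a, b) \<in> G0 \<Longrightarrow> a \<in> Om \<and> b \<in> Om"
proof -
  assume "(a, b) \<in> G0"
  then obtain B u v \<phi> t w where g: "(B, u, v) \<in> \<Gamma> \<or> (B, v, u) \<in> \<Gamma>" and c: "cont_hom_OO F ar U B A \<phi>"
    and t: "wf_trm F ar t" and w: "\<forall>i. w i \<in> Om" and ab: "a = P A w t (\<phi> u)" "b = P A w t (\<phi> v)"
    unfolding G0_iff by blast
  have "u \<in> Omega F ar U B" "v \<in> Omega F ar U B" using g pseud by (auto simp: is_pseudoid_def)
  then have "\<phi> u \<in> Om" "\<phi> v \<in> Om" using c by (auto simp: cont_hom_OO_def is_hom_def)
  then show ?thesis using ab P_in t w by auto
qed

lemma G0_sym: "(a, b) \<in> G0 \<Longrightarrow> (b, a) \<in> G0"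
  unfolding G0_iff by blast

lemma G0_poly: "(a, b) \<in> G0 \<Longrightarrow> wf_trm F ar s \<Longrightarrow> \<forall>i. w' i \<in> Om \<Longrightarrow> (P A w' s a, P A w' s b) \<in> G0"
proof -
  assume "(a, b) \<in> G0" and s: "wf_trm F ar s" and w': "\<forall>i. w' i \<in> Om"
  then obtain B u v \<phi> t w where g: "(B, u, v) \<in> \<Gamma> \<or> (B, v, u) \<in> \<Gamma>" and c: "cont_hom_OO F ar U B A \<phi>"
    and t: "wf_trm F ar t" and w: "\<forall>i. w i \<in> Om" and ab: "a = P A w t (\<phi> u)" "b = P A w t (\<phi> v)"
    unfolding G0_iff by blast
  obtain s'' w'' where "wf_trm F ar s''" "\<forall>i. w'' i \<in> Om" "\<forall>x. P A w' s (P A w t x) = P A w'' s'' x"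
    using P_comp[OF s t w w'] by blast
  then show ?thesis unfolding G0_iff using g c ab by metis
qed

definition theta :: "(('f coord \<Rightarrow> nat) \<times> ('f coord \<Rightarrow> nat)) set" where
  "theta = {(a, b). a \<in> Om \<and> b \<in> Om \<and> (\<forall>t w c. wf_trm F ar t \<longrightarrow> (\<forall>i. w i \<in> Om) \<longrightarrow>
       ((P A w t a, c) \<in> R \<longleftrightarrow> (P A w t b, c) \<in> R))}"

lemma theta_refl: "a \<in> Om \<Longrightarrow> (a, a) \<in> theta" by (simp add: theta_def)
lemma theta_sym: "(a, b) \<in> theta \<Longrightarrow> (b, a) \<in> theta" by (auto simp: theta_def)
lemma theta_trans: "(a, b) \<in> theta \<Longrightarrow> (b, c) \<in> theta \<Longrightarrow> (a, c) \<in> theta" by (auto simp: theta_def)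
lemma theta_in: "(a, b) \<in> theta \<Longrightarrow> a \<in> Om \<and> b \<in> Om" by (auto simp: theta_def)

lemma G0_theta: "(a, b) \<in> G0 \<Longrightarrow> (a, b) \<in> theta"
proof -
  assume ab: "(a, b) \<in> G0"
  have "(P A w t a, c) \<in> R \<longleftrightarrow> (P A w t b, c) \<in> R" if "wf_trm F ar t" "\<forall>i. w i \<in> Om" for t w c
  proof -
    have "(P A w t a, P A w t b) \<in> R" "(P A w t b, P A w t a) \<in> R"
      using G0_poly[OF ab that] G0_poly[OF G0_sym[OF ab] that] G0_R by auto
    then show ?thesis using R_trans by blast
  qed
  then show ?thesis using G0_in[OF ab] by (auto simp: theta_def)
qed

lemma theta_R: "(a, b) \<in> theta \<Longrightarrow> (a, b) \<in> R"
proof -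
  assume ab: "(a, b) \<in> theta"
  define wb where "wb = (\<lambda>_::nat. b)"
  have wf: "wf_trm F ar (Var 0)" by simp
  have w: "\<forall>i. wb i \<in> Om" using theta_in[OF ab] by (simp add: wb_def)
  have "(P A wb (Var 0) b, b) \<in> R" using Id_R theta_in[OF ab] by (simp add: P_def)
  moreover have "(P A wb (Var 0) a, b) \<in> R \<longleftrightarrow> (P A wb (Var 0) b, b) \<in> R"
    using ab wf w unfolding theta_def by blast
  ultimately have "(P A wb (Var 0) a, b) \<in> R" by blast
  then show ?thesis by (simp add: P_def)
qed

lemma theta_poly: "(a, b) \<in> theta \<Longrightarrow> wf_trm F ar s \<Longrightarrow> \<forall>i. w' i \<in> Om \<Longrightarrow> (P A w' s a, P A w' s b) \<in> theta"
proof -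
  assume ab: "(a, b) \<in> theta" and s: "wf_trm F ar s" and w': "\<forall>i. w' i \<in> Om"
  have in1: "P A w' s a \<in> Om" "P A w' s b \<in> Om" using theta_in[OF ab] P_in s w' by auto
  have "(P A w t (P A w' s a), c) \<in> R \<longleftrightarrow> (P A w t (P A w' s b), c) \<in> R"
    if t: "wf_trm F ar t" and w: "\<forall>i. w i \<in> Om" for t w c
  proof -
    obtain s'' w'' where "wf_trm F ar s''" "\<forall>i. w'' i \<in> Om" "\<forall>x. P A w t (P A w' s x) = P A w'' s'' x"
      using P_comp[OF t s w' w] by blast
    then show ?thesis using ab unfolding theta_def by auto
  qed
  then show ?thesis using in1 by (auto simp: theta_def)
qed

lemma theta_opr:
  assumes f: "f \<in> F" and l: "length xs = ar f" "length ys = ar f"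
    and th: "\<forall>i<ar f. (xs ! i, ys ! i) \<in> theta"
  shows "(opr OA f xs, opr OA f ys) \<in> theta"
proof -
  have xsO: "set xs \<subseteq> Om" and ysO: "set ys \<subseteq> Om"
    using th l theta_in by (fastforce simp: in_set_conv_nth)+
  have "k \<le> ar f \<Longrightarrow> (opr OA f xs, opr OA f (take k ys @ drop k xs)) \<in> theta" for k
  proof (induction k)
    case 0
    have "opr OA f xs \<in> Om"
      using Omega_alg_is_alg[of U F ar A] U_alg f l xsO unfolding is_alg_def by auto
    then show ?case by (simp add: theta_refl)
  next
    case (Suc k)
    let ?z = "take k ys @ drop k xs"
    have k: "k < ar f" using Suc by simp
    have lz: "length ?z = ar f" using l k by simp
    have zO: "set ?z \<subseteq> Om" using xsO ysO by (auto dest: in_set_takeD in_set_dropD)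
    have zk: "?z ! k = xs ! k" using l k by (simp add: nth_append)
    have z': "take (Suc k) ys @ drop (Suc k) xs = ?z[k := ys ! k]"
      using l k by (intro nth_equalityI) (auto simp: nth_append nth_list_update min_def)
    obtain t w where t: "wf_trm F ar t" and w: "\<forall>i. w i \<in> Om"
      and Pt: "\<forall>x. P A w t x = opr OA f (?z[k := x])"
      using P_opr[OF f lz k zO] by blast
    have "(P A w t (xs ! k), P A w t (ys ! k)) \<in> theta" using theta_poly th k t w by blast
    then have "(opr OA f ?z, opr OA f (take (Suc k) ys @ drop (Suc k) xs)) \<in> theta"
      using Pt z' zk by (metis list_update_id)
    then show ?case using Suc theta_trans by simp
  qed
  from this[of "ar f"] show ?thesis using l by simp
qed


definition den :: "('f, nat) trm \<Rightarrow> ('f coord \<Rightarrow> nat)" where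
  "den t = teval OA (gen U A) t"

lemma den_in: "t \<in> QT F ar A \<Longrightarrow> den t \<in> Om"
proof -
  assume t: "t \<in> QT F ar A"
  have "teval OA (gen U A) t \<in> carr OA"
    by (rule teval_in[OF Omega_alg_is_alg]) (use U_alg t in \<open>auto simp: QT_def intro!: gen_in\<close>)
  then show ?thesis by (simp add: den_def)
qed

definition tE :: "(('f, nat) trm \<times> ('f, nat) trm) set" where
  "tE = {(s, t). s \<in> QT F ar A \<and> t \<in> QT F ar A \<and> (den s, den t) \<in> theta}"

lemma tE_tquot: "tquot F ar A tE \<Sigma>"
proof
  show "finite F" by (fact finF)
  show "\<forall>(s, t)\<in>\<Sigma>. wf_trm F ar s \<and> wf_trm F ar t" by (fact sigwf)
  show "equiv (QT F ar A) tE"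
    by (rule equivI) (auto simp: tE_def refl_on_def sym_def trans_def intro: theta_refl den_in
        theta_sym theta_trans)
next
  fix f ss ts assume f: "f \<in> F" and l: "length ss = ar f"
    and st: "list_all2 (\<lambda>s t. (s, t) \<in> tE) ss ts"
  have l2: "length ts = ar f" using st l by (simp add: list_all2_lengthD)
  have ss: "set ss \<subseteq> QT F ar A" and ts: "set ts \<subseteq> QT F ar A"
    using st by (fastforce simp: list_all2_conv_all_nth tE_def in_set_conv_nth)+
  have "\<forall>i<ar f. (map den ss ! i, map den ts ! i) \<in> theta"
    using st l l2 by (auto simp: list_all2_conv_all_nth tE_def)
  then have "(opr OA f (map den ss), opr OA f (map den ts)) \<in> theta"
    using theta_opr[OF f] l l2 by simp
  moreover have "map den ss = map (teval OA (gen U A)) ss" "map den ts = map (teval OA (gen U A)) ts"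
    by (simp_all add: den_def[abs_def])
  ultimately have "(den (App f ss), den (App f ts)) \<in> theta"
    by (simp add: den_def)
  then show "(App f ss, App f ts) \<in> tE"
    using f l l2 ss ts by (auto simp: tE_def intro!: QT_App)
next
  fix s t and \<rho> :: "nat \<Rightarrow> ('f, nat) trm"
  assume st: "(s, t) \<in> \<Sigma>" and \<rho>: "\<And>v. \<rho> v \<in> QT F ar A"
  have w: "wf_trm F ar s" "wf_trm F ar t" using st sigwf by auto
  have q: "tsubst \<rho> s \<in> QT F ar A" "tsubst \<rho> t \<in> QT F ar A"
    using w \<rho> by (auto simp: QT_def vars_tsubst intro!: wf_tsubst)
  have sat: "satisfies OA \<Sigma>" using Omega_satisfies U_sat by blast
  have "\<forall>v. den (\<rho> v) \<in> carr OA" using \<rho> den_in by simp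
  then have "teval OA (\<lambda>v. den (\<rho> v)) s = teval OA (\<lambda>v. den (\<rho> v)) t"
    using sat st unfolding satisfies_def by fastforce
  then have "den (tsubst \<rho> s) = den (tsubst \<rho> t)"
    by (simp add: den_def teval_tsubst)
  then show "(tsubst \<rho> s, tsubst \<rho> t) \<in> tE"
    using q by (auto simp: tE_def intro: theta_refl den_in)
qed


end

sublocale prov \<subseteq> tq: tquot F ar A "prov.tE F ar \<Sigma> \<Gamma> A" \<Sigma> by (rule tE_tquot)

context prov
begin

definition pi :: "('f coord \<Rightarrow> nat) \<Rightarrow> nat" where
  "pi x = tq.qc (SOME t. t \<in> QT F ar A \<and> x = den t)"

lemma ex_den: "x \<in> Om \<Longrightarrow> \<exists>t\<in>QT F ar A. x = den t"
  using generation[OF finA] by (simp add: den_def[abs_def])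

lemma some_den: "x \<in> Om \<Longrightarrow> (SOME t. t \<in> QT F ar A \<and> x = den t) \<in> QT F ar A \<and>
   x = den (SOME t. t \<in> QT F ar A \<and> x = den t)"
  using ex_den by (metis (mono_tags, lifting) someI)

lemma pi_den: "t \<in> QT F ar A \<Longrightarrow> pi (den t) = tq.qc t"
proof -
  assume t: "t \<in> QT F ar A"
  let ?s = "SOME s. s \<in> QT F ar A \<and> den t = den s"
  have s: "?s \<in> QT F ar A" "den t = den ?s" using some_den[OF den_in[OF t]] by auto
  then have "(?s, t) \<in> tE" using t by (auto simp: tE_def intro!: theta_refl den_in)
  then show ?thesis unfolding pi_def using tq.qc_eq s t by auto
qed

lemma pi_eq: "a \<in> Om \<Longrightarrow> b \<in> Om \<Longrightarrow> pi a = pi b \<longleftrightarrow> (a, b) \<in> theta"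
proof -
  assume a: "a \<in> Om" and b: "b \<in> Om"
  obtain s t where s: "s \<in> QT F ar A" "a = den s" and t: "t \<in> QT F ar A" "b = den t"
    using ex_den a b by blast
  show ?thesis using s t pi_den tq.qc_eq by (auto simp: tE_def)
qed

lemma pi_hom: "is_hom F ar OA tq.Quot pi"
  unfolding is_hom_def
proof (intro conjI ballI allI impI)
  fix x assume "x \<in> carr OA"
  then obtain t where "t \<in> QT F ar A" "x = den t" using ex_den by auto
  then show "pi x \<in> carr tq.Quot" using pi_den by auto
next
  fix f xs assume f: "f \<in> F" and xs: "length xs = ar f \<and> set xs \<subseteq> carr OA"
  define ts where "ts = map (\<lambda>x. SOME t. t \<in> QT F ar A \<and> x = den t) xs"
  have ts: "set ts \<subseteq> QT F ar A" "map den ts = xs"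
    using xs some_den by (auto simp: ts_def intro!: map_idI)
  have lt: "length ts = ar f" using xs by (simp add: ts_def)
  have "opr OA f xs = den (App f ts)"
    using ts(2) by (simp add: den_def[abs_def])
  then have "pi (opr OA f xs) = tq.qc (App f ts)"
    using pi_den QT_App[OF f lt ts(1)] by simp
  also have "\<dots> = opr tq.Quot f (map tq.qc ts)"
    using tq.opr_qc[OF f lt ts(1)] by simp
  also have "map tq.qc ts = map pi xs"
  proof -
    have "\<forall>t\<in>set ts. tq.qc t = pi (den t)" using ts(1) pi_den by auto
    then show ?thesis using ts(2) by (auto intro!: map_cong)
  qed
  finally show "pi (opr OA f xs) = opr tq.Quot f (map pi xs)" .
qed

lemma pi_cont: "cont_hom_OT F ar U A tq.Quot pi"
  using pi_hom Omega_top_discrete[OF Omega_finite[OF finA]]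
  by (auto simp: cont_hom_OT_def is_hom_def)


lemma T_holds:
  assumes p: "(B, u', v') \<in> \<Gamma>" and chi: "cont_hom_OT F ar U B tq.Quot kk"
  shows "kk u' = kk v'"
proof -
  have B: "finite B" and u': "u' \<in> Omega F ar U B" and v': "v' \<in> Omega F ar U B"
    using p pseud by (auto simp: is_pseudoid_def)
  have chom: "is_hom F ar (Omega_alg F ar U B) tq.Quot kk" using chi by (simp add: cont_hom_OT_def)
  define y where "y b = den (tq.rep (kk (gen U B b)))" for b
  have yq: "b \<in> B \<Longrightarrow> tq.rep (kk (gen U B b)) \<in> QT F ar A \<and> tq.qc (tq.rep (kk (gen U B b))) = kk (gen U B b)" for b
    using tq.rep chom gen_in[of b B U F ar] by (auto simp: is_hom_def)
  have yO: "b \<in> B \<Longrightarrow> y b \<in> Om" for b using yq den_in by (auto simp: y_def)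
  have piy: "b \<in> B \<Longrightarrow> pi (y b) = kk (gen U B b)" for b using yq pi_den by (auto simp: y_def)
  define c' where "c' c = (fst c, \<lambda>b\<in>B. y b c)" for c :: "'f coord"
  have c'B: "c \<in> coords U A \<Longrightarrow> c' c \<in> coords U B" for c
  proof -
    assume c: "c \<in> coords U A"
    obtain T \<psi> where cT: "c = (T, \<psi>)" by fastforce
    have "\<And>b. b \<in> B \<Longrightarrow> y b (T, \<psi>) \<in> carr T" using Omega_val[OF yO] c cT by blast
    then show ?thesis using c cT by (auto simp: coords_def c'_def)
  qed
  define \<phi> where "\<phi> x = (\<lambda>c\<in>coords U A. x (c' c))" for x :: "'f coord \<Rightarrow> nat"
  have \<phi>O: "\<phi> x \<in> Om" if x: "x \<in> Omega F ar U B" for x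
  proof (rule OmegaI)
    show "\<phi> x \<in> extensional (coords U A)" by (simp add: \<phi>_def)
  next
    fix T \<psi> assume c: "(T, \<psi>) \<in> coords U A"
    have "(T, \<lambda>b\<in>B. y b (T, \<psi>)) \<in> coords U B" using c'B[OF c] by (simp add: c'_def)
    from Omega_val[OF x this] show "\<phi> x (T, \<psi>) \<in> carr T"
      using c by (simp add: \<phi>_def c'_def)
  next
    fix T \<psi> T' \<psi>' h assume c1: "(T, \<psi>) \<in> coords U A" and c2: "(T', \<psi>') \<in> coords U A"
      and h: "is_hom F ar T T' h" and hp: "\<And>a. a \<in> A \<Longrightarrow> h (\<psi> a) = \<psi>' a"
    have d1: "(T, \<lambda>b\<in>B. y b (T, \<psi>)) \<in> coords U B" using c'B[OF c1] by (simp add: c'_def)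
    have d2: "(T', \<lambda>b\<in>B. y b (T', \<psi>')) \<in> coords U B" using c'B[OF c2] by (simp add: c'_def)
    have "h (x (T, \<lambda>b\<in>B. y b (T, \<psi>))) = x (T', \<lambda>b\<in>B. y b (T', \<psi>'))"
      by (rule Omega_nat[OF x d1 d2 h]) (simp add: Omega_nat[OF yO c1 c2 h hp])
    then have "h (x (c' (T, \<psi>))) = x (c' (T', \<psi>'))" by (simp add: c'_def)
    then show "h (\<phi> x (T, \<psi>)) = \<phi> x (T', \<psi>')" using c1 c2 by (simp add: \<phi>_def)
  qed
  have \<phi>hom: "is_hom F ar (Omega_alg F ar U B) OA \<phi>"
    unfolding is_hom_def
  proof (intro conjI ballI allI impI)
    fix x assume "x \<in> carr (Omega_alg F ar U B)"
    then show "\<phi> x \<in> carr OA" using \<phi>O by simp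
  next
    fix f xs assume f: "f \<in> F" and xs: "length xs = ar f \<and> set xs \<subseteq> carr (Omega_alg F ar U B)"
    show "\<phi> (opr (Omega_alg F ar U B) f xs) = opr OA f (map \<phi> xs)"
    proof (rule ext)
      fix c
      show "\<phi> (opr (Omega_alg F ar U B) f xs) c = opr OA f (map \<phi> xs) c"
      proof (cases "c \<in> coords U A")
        case True
        then show ?thesis using c'B[OF True]
          by (simp add: \<phi>_def opr_Omega_alg comp_def c'_def)
      next
        case False
        then show ?thesis by (simp add: \<phi>_def opr_Omega_alg)
      qed
    qed
  qed
  have \<phi>cont: "cont_hom_OO F ar U B A \<phi>"
    using \<phi>hom Omega_top_discrete[OF Omega_finite[OF B]] Omega_top_discrete[OF Omega_finite[OF finA]]
    by (auto simp: cont_hom_OO_def is_hom_def)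
  have \<phi>gen: "\<phi> (gen U B b) = y b" if b: "b \<in> B" for b
  proof (rule extensionalityI)
    show "\<phi> (gen U B b) \<in> extensional (coords U A)" by (simp add: \<phi>_def)
    show "y b \<in> extensional (coords U A)" using Omega_ext[OF yO[OF b]] .
    fix c assume c: "c \<in> coords U A"
    show "\<phi> (gen U B b) c = y b c" using c c'B[OF c] b by (simp add: \<phi>_def gen_def c'_def)
  qed
  have comm: "pi (\<phi> x) = kk x" if x: "x \<in> Omega F ar U B" for x
  proof -
    obtain t where t: "t \<in> QT F ar B" and xt: "x = teval (Omega_alg F ar U B) (gen U B) t"
      using generation[OF B x] by blast
    have wt: "wf_trm F ar t" and vt: "vars t \<subseteq> B" using t by (auto simp: QT_def)
    have gB: "\<And>v. v \<in> vars t \<Longrightarrow> gen U B v \<in> carr (Omega_alg F ar U B)"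
      using vt by (auto intro!: gen_in)
    have aB: "is_alg F ar (Omega_alg F ar U B)" using Omega_alg_is_alg U_alg by blast
    have aA: "is_alg F ar OA" using Omega_alg_is_alg U_alg by blast
    have "kk x = teval tq.Quot (\<lambda>v. kk (gen U B v)) t"
      using hom_teval[OF aB chom wt gB] xt by simp
    moreover have "\<phi> x = teval OA (\<lambda>v. \<phi> (gen U B v)) t"
      using hom_teval[OF aB \<phi>hom wt gB] xt by simp
    moreover have "pi (teval OA (\<lambda>v. \<phi> (gen U B v)) t) = teval tq.Quot (\<lambda>v. pi (\<phi> (gen U B v))) t"
      by (rule hom_teval[OF aA pi_hom wt]) (use gB \<phi>hom in \<open>auto simp: is_hom_def\<close>)
    moreover have "teval tq.Quot (\<lambda>v. pi (\<phi> (gen U B v))) t = teval tq.Quot (\<lambda>v. kk (gen U B v)) t"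
      by (rule teval_cong) (use vt \<phi>gen piy in auto)
    ultimately show ?thesis by simp
  qed
  have u'O: "\<phi> u' \<in> Om" "\<phi> v' \<in> Om" using \<phi>O u' v' by auto
  define wb where "wb = (\<lambda>_::nat. \<phi> u')"
  have wb: "\<forall>i. wb i \<in> Om" using u'O by (simp add: wb_def)
  have "(P A wb (Var 0) (\<phi> u'), P A wb (Var 0) (\<phi> v')) \<in> G0"
    unfolding G0_iff
  proof (intro exI conjI)
    show "(B, u', v') \<in> \<Gamma> \<or> (B, v', u') \<in> \<Gamma>" using p by simp
  qed (use \<phi>cont wb in auto)
  then have "(\<phi> u', \<phi> v') \<in> theta" using G0_theta by (simp add: P_def)
  then have "pi (\<phi> u') = pi (\<phi> v')" using pi_eq u'O by blast
  then show ?thesis using comm u' v' by simp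
qed

lemma T_models: "tq.Quot \<in> models F ar U \<Gamma>"
  unfolding models_def holds_in_def
  using tq.Quot_V[OF lf finA] T_holds by auto

end


theorem theorem5p2:
  fixes F :: "'f set" and ar :: "'f \<Rightarrow> nat"
    and \<Sigma> :: "(('f, nat) trm \<times> ('f, nat) trm) set"
  assumes "finite F"
    and "\<forall>(s, t)\<in>\<Sigma>. wf_trm F ar s \<and> wf_trm F ar t"
    and "locally_finite F ar \<Sigma>"
  shows "strong F ar (V_of F ar \<Sigma>)"
  unfolding strong_def
proof (intro allI impI)
  fix \<Gamma> A u v
  assume pse: "\<forall>p\<in>\<Gamma>. is_pseudoid F ar (V_of F ar \<Sigma>) p"
    and h: "finite A \<and> u \<in> Omega F ar (V_of F ar \<Sigma>) A \<and> v \<in> Omega F ar (V_of F ar \<Sigma>) A \<and>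
       (\<forall>T\<in>models F ar (V_of F ar \<Sigma>) \<Gamma>. holds_in F ar (V_of F ar \<Sigma>) T (A, u, v))"
  interpret pr: prov F ar \<Sigma> \<Gamma> A
    using assms pse h by unfold_locales auto
  have "holds_in F ar (V_of F ar \<Sigma>) pr.tq.Quot (A, u, v)" using h pr.T_models by blast
  then have "pr.pi u = pr.pi v" using pr.pi_cont by (simp add: holds_in_def)
  then have "(u, v) \<in> pr.theta" using pr.pi_eq h by blast
  then show "(u, v) \<in> provable_rel F ar (V_of F ar \<Sigma>) \<Gamma> A" by (rule pr.theta_R)
qed

end
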